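(* Let $d\ge 1$ and $n,k\ge 0$ be integers. Let $\mathcal{L}_{r\leq d}(n,k)$ (resp. $\mathcal{L}_{c\leq d}(n,k)$) be the set of lonesum $0$-$1$ matrices with $n$ rows and $k$ columns, with no all-zero row and no all-zero column, such that at most $d$ rows (resp. at most $d$ columns) are of the same type, with no restriction on the number of columns (resp. rows) of the same type. Then \begin{align*} |\mathcal{L}_{r\leq d}(n,k)|&=\sum_{m=0}^{\min(n,k)} m!\,S_{\leq d}(n,m)\; m!\,S(k,m),\\ |\mathcal{L}_{c\leq d}(n,k)|&=\sum_{m=0}^{\min(n,k)} m!\,S(n,m)\; m!\,S_{\leq d}(k,m). \end{align*}
   Context: A $0$-$1$ matrix is lonesum if it is uniquely determined by its row sum vector and column sum vector; equivalently, it contains no $2\times 2$ submatrix equal to $\begin{pmatrix}1&0\\0&1\end{pmatrix}$ or $\begin{pmatrix}0&1\\1&0\end{pmatrix}$. Two rows (resp. columns) are of the same type iff they are identical vectors. $S(n,m)$ is the Stirling number of the second kind (number of partitions of an $n$-set into $m$ non-empty blocks), and $S_{\leq d}(n,m)$ is the number of such partitions in which every block has at most $d$ elements (with $S(0,0)=S_{\le d}(0,0)=1$). *)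

theory Defs
  imports Main "HOL-Combinatorics.Stirling" "HOL-Library.Disjoint_Sets"
begin

definition zo_matrices :: "nat \<Rightarrow> nat \<Rightarrow> (nat \<Rightarrow> nat \<Rightarrow> bool) set" where
  "zo_matrices n k = {A. \<forall>i j. (n \<le> i \<or> k \<le> j) \<longrightarrow> \<not> A i j}"

definition row_sum :: "nat \<Rightarrow> (nat \<Rightarrow> nat \<Rightarrow> bool) \<Rightarrow> nat \<Rightarrow> nat" where
  "row_sum k A i = card {j. j < k \<and> A i j}"

definition col_sum :: "nat \<Rightarrow> (nat \<Rightarrow> nat \<Rightarrow> bool) \<Rightarrow> nat \<Rightarrow> nat" where
  "col_sum n A j = card {i. i < n \<and> A i j}"

definition lonesum :: "nat \<Rightarrow> nat \<Rightarrow> (nat \<Rightarrow> nat \<Rightarrow> bool) \<Rightarrow> bool" where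
  "lonesum n k A \<longleftrightarrow> A \<in> zo_matrices n k \<and>
     (\<forall>B \<in> zo_matrices n k.
        (\<forall>i<n. row_sum k B i = row_sum k A i) \<and> (\<forall>j<k. col_sum n B j = col_sum n A j)
        \<longrightarrow> B = A)"

definition no_zero_row :: "nat \<Rightarrow> nat \<Rightarrow> (nat \<Rightarrow> nat \<Rightarrow> bool) \<Rightarrow> bool" where
  "no_zero_row n k A \<longleftrightarrow> (\<forall>i<n. \<exists>j<k. A i j)"

definition no_zero_col :: "nat \<Rightarrow> nat \<Rightarrow> (nat \<Rightarrow> nat \<Rightarrow> bool) \<Rightarrow> bool" where
  "no_zero_col n k A \<longleftrightarrow> (\<forall>j<k. \<exists>i<n. A i j)"

definition same_row_type :: "nat \<Rightarrow> (nat \<Rightarrow> nat \<Rightarrow> bool) \<Rightarrow> nat \<Rightarrow> nat \<Rightarrow> bool" where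
  "same_row_type k A i i' \<longleftrightarrow> (\<forall>j<k. A i j = A i' j)"

definition same_col_type :: "nat \<Rightarrow> (nat \<Rightarrow> nat \<Rightarrow> bool) \<Rightarrow> nat \<Rightarrow> nat \<Rightarrow> bool" where
  "same_col_type n A j j' \<longleftrightarrow> (\<forall>i<n. A i j = A i j')"

definition rows_le :: "nat \<Rightarrow> nat \<Rightarrow> nat \<Rightarrow> (nat \<Rightarrow> nat \<Rightarrow> bool) \<Rightarrow> bool" where
  "rows_le d n k A \<longleftrightarrow> (\<forall>i<n. card {i'. i' < n \<and> same_row_type k A i i'} \<le> d)"

definition cols_le :: "nat \<Rightarrow> nat \<Rightarrow> nat \<Rightarrow> (nat \<Rightarrow> nat \<Rightarrow> bool) \<Rightarrow> bool" where
  "cols_le d n k A \<longleftrightarrow> (\<forall>j<k. card {j'. j' < k \<and> same_col_type n A j j'} \<le> d)"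

definition L_row_le :: "nat \<Rightarrow> nat \<Rightarrow> nat \<Rightarrow> (nat \<Rightarrow> nat \<Rightarrow> bool) set" where
  "L_row_le d n k = {A. lonesum n k A \<and> no_zero_row n k A \<and> no_zero_col n k A \<and> rows_le d n k A}"

definition L_col_le :: "nat \<Rightarrow> nat \<Rightarrow> nat \<Rightarrow> (nat \<Rightarrow> nat \<Rightarrow> bool) set" where
  "L_col_le d n k = {A. lonesum n k A \<and> no_zero_row n k A \<and> no_zero_col n k A \<and> cols_le d n k A}"

definition Stirling_le :: "nat \<Rightarrow> nat \<Rightarrow> nat \<Rightarrow> nat" where
  "Stirling_le d n m = card {P. partition_on {..<n} P \<and> card P = m \<and> (\<forall>B\<in>P. card B \<le> d)}"

end

theory Submission
  imports Defs "HOL-Library.FuncSet"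
begin

lemma card_inj_ext:
  assumes "finite S" "finite T" "card S \<le> card T"
  shows "card {f \<in> S \<rightarrow>\<^sub>E T. inj_on f S} = fact (card T) div (fact (card T - card S))"
  using assms
proof (induct S arbitrary: T rule: finite_induct)
  case empty
  from this show ?case
    by (simp add: Collect_conv_if PiE_empty_domain)
next
  case (insert x S)
  have finite_delete: "finite {f \<in> S \<rightarrow>\<^sub>E (T - {y}). inj_on f S}" for y
    by (rule finite_subset[of _ "S \<rightarrow>\<^sub>E (T - {y})"]) (use insert in \<open>auto intro: finite_PiE\<close>)
  have cS: "card (insert x S) = Suc (card S)" using insert by simp
  have hyps: "card {g \<in> S \<rightarrow>\<^sub>E (T - {y}). inj_on g S} =
      fact (card T - 1) div fact ((card T - 1) - card S)" if "y \<in> T" for y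
  proof -
    have "card (T - {y}) = card T - 1" using that insert.prems(1) by simp
    moreover have "card S \<le> card (T - {y})" using calculation insert.prems(2) cS by linarith
    ultimately show ?thesis using insert.hyps(3)[of "T - {y}"] insert.prems(1) by simp
  qed
  have "card {f \<in> (insert x S) \<rightarrow>\<^sub>E T. inj_on f (insert x S)} =
      card ((\<lambda>(y, g). g(x := y)) ` {(y, g). y \<in> T \<and> g \<in> S \<rightarrow>\<^sub>E (T - {y}) \<and> inj_on g S})"
    using extensional_funcset_extend_domain_inj_on_eq[OF \<open>x \<notin> S\<close>, of T] by simp
  also have "\<dots> = card {(y, g). y \<in> T \<and> g \<in> S \<rightarrow>\<^sub>E (T - {y}) \<and> inj_on g S}"
    by (rule card_image[OF extensional_funcset_extend_domain_inj_onI[OF \<open>x \<notin> S\<close>]])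
  also have "{(y, g). y \<in> T \<and> g \<in> S \<rightarrow>\<^sub>E (T - {y}) \<and> inj_on g S} =
      (SIGMA y:T. {f \<in> S \<rightarrow>\<^sub>E (T - {y}). inj_on f S})"
    by (simp add: Sigma_def) blast
  also have "card \<dots> = (\<Sum>y \<in> T. card {g \<in> S \<rightarrow>\<^sub>E (T - {y}). inj_on g S})"
    by (rule card_SigmaI) (use insert finite_delete in auto)
  also have "\<dots> = (\<Sum>y \<in> T. fact (card T - 1) div fact ((card T - 1) - card S))"
    by (rule sum.cong[OF refl]) (rule hyps)
  also have "\<dots> = card T * (fact (card T - 1) div fact ((card T - 1) - card S))"
    by simp
  also have "\<dots> = card T * fact (card T - 1) div fact (card T - card (insert x S))"
    using insert unfolding div_mult1_eq[of "card T" "fact (card T - 1)"]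
    by (simp add: fact_mod)
  also have "\<dots> = fact (card T) div fact (card T - card (insert x S))"
    using insert by (simp add: fact_reduce[of "card T"])
  finally show ?case .
qed

definition sur :: "'a set \<Rightarrow> 'b set \<Rightarrow> ('a \<Rightarrow> 'b) set" where
  "sur A B = {f \<in> A \<rightarrow>\<^sub>E B. f ` A = B}"

lemma finite_sur: "finite A \<Longrightarrow> finite B \<Longrightarrow> finite (sur A B)"
  unfolding sur_def by (rule finite_subset[of _ "A \<rightarrow>\<^sub>E B"]) (auto intro: finite_PiE)

lemma card_sur:
  "finite A \<Longrightarrow> finite B \<Longrightarrow> card (sur A B) = fact (card B) * Stirling (card A) (card B)"
proof (induction A arbitrary: B rule: finite_induct)
  case empty
  show ?case
  proof (cases "B = {}")
    case True
    then show ?thesis by (simp add: sur_def PiE_empty_domain)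
  next
    case False
    then obtain m where "card B = Suc m" using empty
      by (metis card_0_eq not0_implies_Suc)
    then show ?thesis using False by (auto simp: sur_def PiE_empty_domain)
  qed
next
  case (insert a A)
  have eq: "sur (insert a A) B = (\<Union>c\<in>B. (\<lambda>g. g(a:=c)) ` (sur A B \<union> sur A (B - {c})))"
  proof
    show "sur (insert a A) B \<subseteq> (\<Union>c\<in>B. (\<lambda>g. g(a:=c)) ` (sur A B \<union> sur A (B - {c})))"
    proof
      fix f assume f: "f \<in> sur (insert a A) B"
      define g where "g = f(a := undefined)"
      have fa: "f a \<in> B" using f by (auto simp: sur_def)
      have gA: "g ` A = f ` A" using insert(2) by (auto simp: g_def)
      have g1: "g \<in> A \<rightarrow>\<^sub>E B" using f insert(2) by (auto simp: sur_def g_def PiE_def extensional_def)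
      have im: "insert (f a) (g ` A) = B" using f gA by (auto simp: sur_def)
      have "g \<in> sur A B \<union> sur A (B - {f a})"
      proof (cases "f a \<in> g ` A")
        case True
        then have "g ` A = B" using im by auto
        then show ?thesis using g1 by (auto simp: sur_def)
      next
        case False
        then have "g ` A = B - {f a}" using im by blast
        then show ?thesis using g1 by (auto simp: sur_def PiE_def Pi_def)
      qed
      moreover have "f = g(a := f a)" by (auto simp: g_def)
      ultimately show "f \<in> (\<Union>c\<in>B. (\<lambda>g. g(a:=c)) ` (sur A B \<union> sur A (B - {c})))"
        using fa by blast
    qed
  next
    show "(\<Union>c\<in>B. (\<lambda>g. g(a:=c)) ` (sur A B \<union> sur A (B - {c}))) \<subseteq> sur (insert a A) B"
    proof clarify
      fix c g assume c: "c \<in> B" and g: "g \<in> sur A B \<union> sur A (B - {c})"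
      have "g ` A \<subseteq> B" "B - {c} \<subseteq> g ` A" using g by (auto simp: sur_def)
      moreover have "(g(a:=c)) ` insert a A = insert c (g ` A)" using insert(2) by auto
      moreover have "g(a:=c) \<in> insert a A \<rightarrow>\<^sub>E B" using g c by (auto simp: sur_def PiE_def Pi_def extensional_def)
      ultimately show "g(a:=c) \<in> sur (insert a A) B" using c unfolding sur_def by auto
    qed
  qed
  have inj: "inj_on (\<lambda>g. g(a:=c)) (sur A B \<union> sur A (B - {c}))" for c
  proof (rule inj_onI)
    fix g h assume g: "g \<in> sur A B \<union> sur A (B - {c})" and h: "h \<in> sur A B \<union> sur A (B - {c})"
      and e: "g(a:=c) = h(a:=c)"
    have "g a = h a" using g h insert(2) by (auto simp: sur_def PiE_def extensional_def)
    then show "g = h" using e by (metis fun_upd_triv fun_upd_upd)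
  qed
  have disj: "sur A B \<inter> sur A (B - {c}) = {}" if "c \<in> B" for c
    using that by (auto simp: sur_def)
  have "card (sur (insert a A) B) = (\<Sum>c\<in>B. card ((\<lambda>g. g(a:=c)) ` (sur A B \<union> sur A (B - {c}))))"
    unfolding eq
  proof (rule card_UN_disjoint)
    show "finite B" by fact
    show "\<forall>i\<in>B. finite ((\<lambda>g. g(a := i)) ` (sur A B \<union> sur A (B - {i})))"
      using insert by (auto intro: finite_sur)
    show "\<forall>i\<in>B. \<forall>j\<in>B. i \<noteq> j \<longrightarrow> (\<lambda>g. g(a := i)) ` (sur A B \<union> sur A (B - {i})) \<inter>
        (\<lambda>g. g(a := j)) ` (sur A B \<union> sur A (B - {j})) = {}"
      by (auto dest: fun_cong[where x=a])
  qed
  also have "\<dots> = (\<Sum>c\<in>B. card (sur A B) + card (sur A (B - {c})))"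
    apply (rule sum.cong[OF refl])
    apply (subst card_image[OF inj])
    apply (rule card_Un_disjoint)
    using insert by (auto intro: finite_sur simp: disj)
  also have "\<dots> = (\<Sum>c\<in>B. fact (card B) * Stirling (card A) (card B) +
       fact (card B - 1) * Stirling (card A) (card B - 1))"
    apply (rule sum.cong[OF refl])
    using insert by (simp add: card_Diff_singleton)
  also have "\<dots> = card B * (fact (card B) * Stirling (card A) (card B) +
       fact (card B - 1) * Stirling (card A) (card B - 1))" by simp
  also have "\<dots> = fact (card B) * Stirling (card (insert a A)) (card B)"
  proof (cases "card B")
    case 0 then show ?thesis using insert by simp
  next
    case (Suc m)
    then show ?thesis using insert by (simp add: algebra_simps)
  qed
  finally show ?case .
qed

definition surd :: "nat \<Rightarrow> 'a set \<Rightarrow> 'b set \<Rightarrow> ('a \<Rightarrow> 'b) set" where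
  "surd d A B = {f \<in> sur A B. \<forall>b\<in>B. card {a\<in>A. f a = b} \<le> d}"

definition parts :: "nat \<Rightarrow> 'a set \<Rightarrow> nat \<Rightarrow> 'a set set set" where
  "parts d A m = {P. partition_on A P \<and> card P = m \<and> (\<forall>X\<in>P. card X \<le> d)}"

definition blk :: "'a set set \<Rightarrow> 'a \<Rightarrow> 'a set" where
  "blk P a = (THE X. X \<in> P \<and> a \<in> X)"

lemma blk_eq:
  assumes "partition_on A P" "X \<in> P" "a \<in> X"
  shows "blk P a = X"
  unfolding blk_def
proof (rule the_equality)
  show "X \<in> P \<and> a \<in> X" using assms by simp
  fix Y assume "Y \<in> P \<and> a \<in> Y"
  then show "Y = X" using assms partition_onD2[OF assms(1)]
    by (auto simp: pairwise_def disjnt_def)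
qed

lemma blk_ex:
  assumes "partition_on A P" "a \<in> A"
  shows "blk P a \<in> P \<and> a \<in> blk P a"
proof -
  obtain X where "X \<in> P" "a \<in> X" using assms partition_onD1[OF assms(1)] by auto
  then show ?thesis using blk_eq[OF assms(1)] by simp
qed

lemma card_surd:
  assumes A: "finite A" and B: "finite B"
  shows "card (surd d A B) = fact (card B) * card (parts d A (card B))"
proof -
  define fib where "fib f = (\<lambda>b. {a\<in>A. f a = b}) ` B" for f :: "'a \<Rightarrow> 'b"
  define F where "F P h = (\<lambda>a\<in>A. h (blk P a))" for P and h :: "'a set \<Rightarrow> 'b"
  define S where "S P = {f \<in> surd d A B. fib f = P}" for P
  have fibP: "fib f \<in> parts d A (card B)" if f: "f \<in> surd d A B" for f
  proof -
    have fA: "f \<in> A \<rightarrow>\<^sub>E B" "f ` A = B" and fd: "\<forall>b\<in>B. card {a\<in>A. f a = b} \<le> d"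
      using f by (auto simp: surd_def sur_def)
    have ne: "{a\<in>A. f a = b} \<noteq> {}" if "b \<in> B" for b using fA that by auto
    have "partition_on A (fib f)"
    proof (rule partition_onI)
      show "\<Union> (fib f) = A" using fA by (auto simp: fib_def)
      show "disjnt p q" if "p \<in> fib f" "q \<in> fib f" "p \<noteq> q" for p q
        using that by (auto simp: fib_def disjnt_def)
      show "{} \<notin> fib f" using ne by (auto simp: fib_def)
    qed
    moreover have "card (fib f) = card B"
      unfolding fib_def
    proof (rule card_image, rule inj_onI)
      fix b b' assume "b \<in> B" "b' \<in> B" and e: "{a \<in> A. f a = b} = {a \<in> A. f a = b'}"
      then obtain a where "a \<in> A" "f a = b" using ne by blast
      then show "b = b'" using e by blast
    qed
    moreover have "\<forall>X\<in>fib f. card X \<le> d" using fd by (auto simp: fib_def)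
    ultimately show ?thesis by (simp add: parts_def)
  qed
  have un: "surd d A B = (\<Union>P\<in>parts d A (card B). S P)"
    using fibP by (auto simp: S_def)
  have finP: "finite (parts d A (card B))"
    by (rule finite_subset[OF _ finitely_many_partition_on[OF A]]) (auto simp: parts_def)
  have finS: "finite (S P)" for P
    by (rule finite_subset[of _ "A \<rightarrow>\<^sub>E B"]) (auto simp: S_def surd_def sur_def intro: finite_PiE A B)
  have cardS: "card (S P) = fact (card B)" if P: "P \<in> parts d A (card B)" for P
  proof -
    have pP: "partition_on A P" and cP: "card P = card B" and dP: "\<forall>X\<in>P. card X \<le> d"
      using P by (auto simp: parts_def)
    have finPP: "finite P" using finite_elements[OF A pP] .
    define H where "H = {h \<in> P \<rightarrow>\<^sub>E B. inj_on h P}"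
    have neX: "X \<noteq> {}" if "X \<in> P" for X using partition_onD3[OF pP] that by auto
    have XA: "X \<subseteq> A" if "X \<in> P" for X using partition_onD1[OF pP] that by auto
    have cH: "card H = fact (card B)"
      unfolding H_def using card_inj_ext[OF finPP B] cP by simp
    have img: "F P ` H = S P"
    proof
      show "F P ` H \<subseteq> S P"
      proof
        fix f assume "f \<in> F P ` H"
        then obtain h where h: "h \<in> H" and fh: "f = F P h" by auto
        have hPB: "h \<in> P \<rightarrow>\<^sub>E B" and hi: "inj_on h P" using h by (auto simp: H_def)
        have hP: "h ` P = B"
        proof (rule card_subset_eq[OF B])
          show "h ` P \<subseteq> B" using hPB by auto
          show "card (h ` P) = card B" using card_image[OF hi] cP by simp
        qed
        have fib_eq: "{a\<in>A. f a = h X} = X" if X: "X \<in> P" for X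
        proof
          show "{a\<in>A. f a = h X} \<subseteq> X"
          proof clarify
            fix a assume a: "a \<in> A" "f a = h X"
            have "blk P a \<in> P" "a \<in> blk P a" using blk_ex[OF pP a(1)] by auto
            moreover have "h (blk P a) = h X" using a by (simp add: fh F_def)
            ultimately have "blk P a = X" using hi X by (auto dest: inj_onD)
            then show "a \<in> X" using \<open>a \<in> blk P a\<close> by simp
          qed
          show "X \<subseteq> {a\<in>A. f a = h X}"
            using XA[OF X] blk_eq[OF pP X] by (auto simp: fh F_def)
        qed
        have "f \<in> A \<rightarrow>\<^sub>E B" using hPB blk_ex[OF pP] by (auto simp: fh F_def)
        moreover have "f ` A = B"
        proof
          show "f ` A \<subseteq> B" using \<open>f \<in> A \<rightarrow>\<^sub>E B\<close> by auto
          show "B \<subseteq> f ` A"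
          proof
            fix b assume "b \<in> B"
            then obtain X where X: "X \<in> P" "b = h X" using hP by auto
            then obtain a where "a \<in> X" using neX by blast
            then have "a \<in> {a\<in>A. f a = h X}" using fib_eq[OF X(1)] by simp
            then have "a \<in> A" "f a = b" using X by auto
            then show "b \<in> f ` A" by (metis imageI)
          qed
        qed
        moreover have "\<forall>b\<in>B. card {a\<in>A. f a = b} \<le> d"
          using hP fib_eq dP by auto
        moreover have "fib f = P"
        proof -
          have "fib f = (\<lambda>X. {a\<in>A. f a = h X}) ` P" unfolding fib_def using hP by auto
          also have "\<dots> = P" using fib_eq by simp
          finally show ?thesis .
        qed
        ultimately show "f \<in> S P" by (simp add: S_def surd_def sur_def)
      qed
    next
      show "S P \<subseteq> F P ` H"
      proof
        fix f assume f: "f \<in> S P"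
        have fA: "f \<in> A \<rightarrow>\<^sub>E B" "f ` A = B" and ff: "fib f = P"
          using f by (auto simp: S_def surd_def sur_def)
        define h where "h = (\<lambda>X\<in>P. f (SOME a. a \<in> X))"
        have hX: "h X = b" if "X \<in> P" "X = {a\<in>A. f a = b}" for X b
        proof -
          have "(SOME a. a \<in> X) \<in> X" using neX[OF that(1)] by (simp add: some_in_eq)
          then show ?thesis using that by (auto simp: h_def)
        qed
        have "h \<in> H"
        proof -
          have "h \<in> P \<rightarrow>\<^sub>E B"
          proof
            fix X assume X: "X \<in> P"
            then obtain b where "b \<in> B" "X = {a\<in>A. f a = b}" using ff by (auto simp: fib_def)
            then show "h X \<in> B" using hX X by simp
          qed (simp add: h_def)
          moreover have "inj_on h P"
          proof (rule inj_onI)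
            fix X Y assume X: "X \<in> P" and Y: "Y \<in> P" and e: "h X = h Y"
            obtain b where "X = {a\<in>A. f a = b}" using X ff by (auto simp: fib_def)
            moreover obtain b' where "Y = {a\<in>A. f a = b'}" using Y ff by (auto simp: fib_def)
            ultimately show "X = Y" using hX X Y e by auto
          qed
          ultimately show ?thesis by (simp add: H_def)
        qed
        moreover have "f = F P h"
        proof
          fix a show "f a = F P h a"
          proof (cases "a \<in> A")
            case True
            have bk: "blk P a \<in> P" "a \<in> blk P a" using blk_ex[OF pP True] by auto
            then obtain b where "blk P a = {x\<in>A. f x = b}" using ff by (auto simp: fib_def)
            moreover then have "f a = b" using bk by auto
            ultimately show ?thesis using hX bk True by (simp add: F_def)
          next
            case False
            then show ?thesis using fA by (simp add: F_def PiE_def extensional_def)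
          qed
        qed
        ultimately show "f \<in> F P ` H" by blast
      qed
    qed
    have inj: "inj_on (F P) H"
    proof (rule inj_onI)
      fix h1 h2 assume h1: "h1 \<in> H" and h2: "h2 \<in> H" and e: "F P h1 = F P h2"
      show "h1 = h2"
      proof
        fix X show "h1 X = h2 X"
        proof (cases "X \<in> P")
          case True
          then obtain a where a: "a \<in> X" using neX by blast
          then have "a \<in> A" "blk P a = X" using XA[OF True] blk_eq[OF pP True] by auto
          then show ?thesis using fun_cong[OF e, of a] by (simp add: F_def)
        next
          case False
          then show ?thesis using h1 h2 by (auto simp: H_def PiE_def extensional_def)
        qed
      qed
    qed
    show ?thesis using card_image[OF inj] img cH by simp
  qed
  have "card (surd d A B) = (\<Sum>P\<in>parts d A (card B). card (S P))"
    unfolding un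
    by (rule card_UN_disjoint[OF finP]) (use finS in \<open>auto simp: S_def\<close>)
  also have "\<dots> = (\<Sum>P\<in>parts d A (card B). fact (card B))"
    by (rule sum.cong[OF refl]) (rule cardS)
  finally show ?thesis by simp
qed

definition noswitch :: "nat \<Rightarrow> nat \<Rightarrow> (nat \<Rightarrow> nat \<Rightarrow> bool) \<Rightarrow> bool" where
  "noswitch n k A \<longleftrightarrow> (\<forall>i<n. \<forall>i'<n. \<forall>j<k. \<forall>j'<k. A i j \<and> A i' j' \<longrightarrow> A i j' \<or> A i' j)"

lemma chain_unique:
  fixes A B :: "nat \<Rightarrow> nat \<Rightarrow> bool"
  assumes "finite I"
  shows "(\<forall>i\<in>I. \<forall>i'\<in>I. \<forall>j<k. \<forall>j'<k. A i j \<and> A i' j' \<longrightarrow> A i j' \<or> A i' j) \<Longrightarrow>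
    (\<forall>i\<in>I. card {j. j<k \<and> B i j} = card {j. j<k \<and> A i j}) \<Longrightarrow>
    (\<forall>j<k. card {i\<in>I. B i j} = card {i\<in>I. A i j}) \<Longrightarrow>
    (\<forall>i\<in>I. \<forall>j<k. B i j = A i j)"
  using assms
proof (induction I rule: finite_psubset_induct)
  case (psubset I)
  note ns = psubset.prems(1) and rs = psubset.prems(2) and cs = psubset.prems(3)
  show ?case
  proof (cases "I = {}")
    case True then show ?thesis by simp
  next
    case False
    define r where "r i = card {j. j<k \<and> A i j}" for i
    define M where "M = Max (r ` I)"
    have "M \<in> r ` I" unfolding M_def using False psubset.hyps by simp
    then obtain i0 where i0: "i0 \<in> I" "r i0 = M" by auto
    have mx: "r i \<le> r i0" if "i \<in> I" for i
      using that i0 psubset.hyps unfolding M_def by simp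
    have cl1: "A i0 j" if "i \<in> I" "j < k" "A i j" for i j
    proof (rule ccontr)
      assume nA: "\<not> A i0 j"
      have "{j'. j'<k \<and> A i0 j'} \<subset> {j'. j'<k \<and> A i j'}"
      proof
        show "{j'. j'<k \<and> A i0 j'} \<subseteq> {j'. j'<k \<and> A i j'}"
          using ns that i0(1) nA by blast
        show "{j'. j'<k \<and> A i0 j'} \<noteq> {j'. j'<k \<and> A i j'}" using that nA by blast
      qed
      then have "r i0 < r i" unfolding r_def by (rule psubset_card_mono[rotated]) simp
      then show False using mx[OF that(1)] by simp
    qed
    have cl2: "A i0 j" if "j < k" "B i0 j" for j
    proof -
      have "i0 \<in> {i\<in>I. B i j}" using that i0 by simp
      then have "card {i\<in>I. B i j} \<noteq> 0" using psubset.hyps by auto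
      then have "card {i\<in>I. A i j} \<noteq> 0" using cs that by simp
      then obtain i where "i \<in> I" "A i j" by (metis (mono_tags, lifting) Collect_empty_eq card.empty)
      then show ?thesis using cl1 that by blast
    qed
    have row0: "{j. j<k \<and> B i0 j} = {j. j<k \<and> A i0 j}"
    proof (rule card_subset_eq)
      show "finite {j. j<k \<and> A i0 j}" by simp
      show "{j. j<k \<and> B i0 j} \<subseteq> {j. j<k \<and> A i0 j}" using cl2 by blast
      show "card {j. j<k \<and> B i0 j} = card {j. j<k \<and> A i0 j}" using rs i0 by simp
    qed
    have r0: "B i0 j = A i0 j" if "j < k" for j using row0 that by blast
    have IH: "\<forall>i\<in>I - {i0}. \<forall>j<k. B i j = A i j"
    proof (rule psubset.IH)
      show "I - {i0} \<subset> I" using i0 by blast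
      show "\<forall>i\<in>I - {i0}. \<forall>i'\<in>I - {i0}. \<forall>j<k. \<forall>j'<k. A i j \<and> A i' j' \<longrightarrow> A i j' \<or> A i' j"
        using ns by blast
      show "\<forall>i\<in>I - {i0}. card {j. j < k \<and> B i j} = card {j. j < k \<and> A i j}" using rs by blast
      show "\<forall>j<k. card {i \<in> I - {i0}. B i j} = card {i \<in> I - {i0}. A i j}"
      proof (intro allI impI)
        fix j assume j: "j < k"
        have e1: "{i \<in> I - {i0}. B i j} = {i\<in>I. B i j} - {i0}" by blast
        have e2: "{i \<in> I - {i0}. A i j} = {i\<in>I. A i j} - {i0}" by blast
        show "card {i \<in> I - {i0}. B i j} = card {i \<in> I - {i0}. A i j}"
          unfolding e1 e2 using cs j r0[OF j] i0(1) psubset.hyps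
          by (simp add: card_Diff_singleton_if)
      qed
    qed
    show ?thesis using IH r0 i0 by blast
  qed
qed

lemma card_swap1:
  assumes "finite S" "a \<in> S" "b \<notin> S"
  shows "card (insert b (S - {a})) = card S"
  using assms by (simp add: card_Diff_singleton) (metis Suc_pred card_gt_0_iff emptyE)

lemma lonesum_iff:
  assumes Z: "A \<in> zo_matrices n k"
  shows "lonesum n k A \<longleftrightarrow> noswitch n k A"
proof
  assume ns: "noswitch n k A"
  show "lonesum n k A" unfolding lonesum_def
  proof (intro conjI ballI impI)
    show "A \<in> zo_matrices n k" by fact
    fix B assume BZ: "B \<in> zo_matrices n k" and
      s: "(\<forall>i<n. row_sum k B i = row_sum k A i) \<and> (\<forall>j<k. col_sum n B j = col_sum n A j)"
    have "\<forall>i\<in>{..<n}. \<forall>j<k. B i j = A i j"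
    proof (rule chain_unique)
      show "finite {..<n}" by simp
      show "\<forall>i\<in>{..<n}. \<forall>i'\<in>{..<n}. \<forall>j<k. \<forall>j'<k. A i j \<and> A i' j' \<longrightarrow> A i j' \<or> A i' j"
        using ns by (simp add: noswitch_def)
      show "\<forall>i\<in>{..<n}. card {j. j < k \<and> B i j} = card {j. j < k \<and> A i j}"
        using s by (simp add: row_sum_def)
      have "{i \<in> {..<n}. P i} = {i. i < n \<and> P i}" for P by auto
      then show "\<forall>j<k. card {i \<in> {..<n}. B i j} = card {i \<in> {..<n}. A i j}"
        using s by (simp add: col_sum_def)
    qed
    note R = this
    show "B = A"
    proof (intro ext)
      fix x y show "B x y = A x y"
      proof (cases "x < n \<and> y < k")
        case True then show ?thesis using R by simp
      next
        case False
        then have "n \<le> x \<or> k \<le> y" by auto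
        then show ?thesis using Z BZ unfolding zo_matrices_def by blast
      qed
    qed
  qed
next
  assume L: "lonesum n k A"
  show "noswitch n k A" unfolding noswitch_def
  proof (rule ccontr)
    assume "\<not> (\<forall>i<n. \<forall>i'<n. \<forall>j<k. \<forall>j'<k. A i j \<and> A i' j' \<longrightarrow> A i j' \<or> A i' j)"
    then obtain i i' j j' where ii: "i < n" "i' < n" "j < k" "j' < k"
      and a: "A i j" "A i' j'" "\<not> A i j'" "\<not> A i' j" by blast
    have ne: "i \<noteq> i'" "j \<noteq> j'" using a by auto
    define B where "B x y = (if (x = i \<and> y = j) \<or> (x = i' \<and> y = j') then False
        else if (x = i \<and> y = j') \<or> (x = i' \<and> y = j) then True else A x y)" for x y
    have BZ: "B \<in> zo_matrices n k" using Z ii by (auto simp: zo_matrices_def B_def)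
    have rows: "row_sum k B x = row_sum k A x" if "x < n" for x
    proof -
      consider "x = i" | "x = i'" | "x \<noteq> i" "x \<noteq> i'" by blast
      then show ?thesis
      proof cases
        case 1
        then have "{y. y < k \<and> B x y} = insert j' ({y. y < k \<and> A x y} - {j})"
          using ii a ne by (auto simp: B_def)
        then show ?thesis using card_swap1[of "{y. y < k \<and> A x y}" j j'] 1 ii a
          by (simp add: row_sum_def)
      next
        case 2
        then have "{y. y < k \<and> B x y} = insert j ({y. y < k \<and> A x y} - {j'})"
          using ii a ne by (auto simp: B_def)
        then show ?thesis using card_swap1[of "{y. y < k \<and> A x y}" j' j] 2 ii a
          by (simp add: row_sum_def)
      next
        case 3
        then have "{y. y < k \<and> B x y} = {y. y < k \<and> A x y}" by (auto simp: B_def)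
        then show ?thesis by (simp add: row_sum_def)
      qed
    qed
    have cols: "col_sum n B y = col_sum n A y" if "y < k" for y
    proof -
      consider "y = j" | "y = j'" | "y \<noteq> j" "y \<noteq> j'" by blast
      then show ?thesis
      proof cases
        case 1
        then have "{x. x < n \<and> B x y} = insert i' ({x. x < n \<and> A x y} - {i})"
          using ii a ne by (auto simp: B_def)
        then show ?thesis using card_swap1[of "{x. x < n \<and> A x y}" i i'] 1 ii a
          by (simp add: col_sum_def)
      next
        case 2
        then have "{x. x < n \<and> B x y} = insert i ({x. x < n \<and> A x y} - {i'})"
          using ii a ne by (auto simp: B_def)
        then show ?thesis using card_swap1[of "{x. x < n \<and> A x y}" i' i] 2 ii a
          by (simp add: col_sum_def)
      next
        case 3
        then have "{x. x < n \<and> B x y} = {x. x < n \<and> A x y}" by (auto simp: B_def)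
        then show ?thesis by (simp add: col_sum_def)
      qed
    qed
    have "B = A" using L BZ rows cols by (simp add: lonesum_def)
    moreover have "B i j \<noteq> A i j" using a by (simp add: B_def)
    ultimately show False by simp
  qed
qed

definition Phi :: "nat \<Rightarrow> nat \<Rightarrow> (nat \<Rightarrow> nat) \<Rightarrow> (nat \<Rightarrow> nat) \<Rightarrow> nat \<Rightarrow> nat \<Rightarrow> bool" where
  "Phi n k f g = (\<lambda>i j. i < n \<and> j < k \<and> g j \<le> f i)"

definition rowset :: "nat \<Rightarrow> (nat \<Rightarrow> nat \<Rightarrow> bool) \<Rightarrow> nat \<Rightarrow> nat set" where
  "rowset k A i = {j. j < k \<and> A i j}"

definition colset :: "nat \<Rightarrow> (nat \<Rightarrow> nat \<Rightarrow> bool) \<Rightarrow> nat \<Rightarrow> nat set" where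
  "colset n A j = {i. i < n \<and> A i j}"

definition rk :: "nat \<Rightarrow> nat \<Rightarrow> (nat \<Rightarrow> nat \<Rightarrow> bool) \<Rightarrow> nat \<Rightarrow> nat" where
  "rk n k A i = card {rowset k A i' | i'. i' < n \<and> rowset k A i' \<subset> rowset k A i}"

definition ck :: "nat \<Rightarrow> nat \<Rightarrow> (nat \<Rightarrow> nat \<Rightarrow> bool) \<Rightarrow> nat \<Rightarrow> nat" where
  "ck n k A j = card {colset n A j' | j'. j' < k \<and> colset n A j \<subset> colset n A j'}"

lemma rank_count1:
  assumes "\<forall>a<m. \<forall>b<m. (S a \<subset> S b) = (a < b)" "q < m"
  shows "card {S b | b. b < m \<and> S b \<subset> S q} = q"
proof -
  have e: "{S b | b. b < m \<and> S b \<subset> S q} = S ` {..<q}"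
  proof
    show "{S b | b. b < m \<and> S b \<subset> S q} \<subseteq> S ` {..<q}"
    proof
      fix X assume "X \<in> {S b | b. b < m \<and> S b \<subset> S q}"
      then obtain b where b: "X = S b" "b < m" "S b \<subset> S q" by blast
      then have "b < q" using assms by blast
      then show "X \<in> S ` {..<q}" using b by simp
    qed
    show "S ` {..<q} \<subseteq> {S b | b. b < m \<and> S b \<subset> S q}"
    proof
      fix X assume "X \<in> S ` {..<q}"
      then obtain b where b: "b < q" "X = S b" by auto
      then have "b < m" using assms by simp
      then have "S b \<subset> S q" using assms b by blast
      then show "X \<in> {S b | b. b < m \<and> S b \<subset> S q}" using b \<open>b < m\<close> by blast
    qed
  qed
  have "inj_on S {..<q}"
  proof (rule inj_onI)
    fix a b assume "a \<in> {..<q}" "b \<in> {..<q}" "S a = S b"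
    note h = this
    show "a = b"
    proof (rule ccontr)
      assume "a \<noteq> b"
      then have "a < b \<or> b < a" by arith
      moreover have "a < m" "b < m" using h assms(2) by auto
      ultimately have "S a \<subset> S b \<or> S b \<subset> S a" using assms(1) by blast
      then show False using h(3) by auto
    qed
  qed
  then show ?thesis unfolding e by (simp add: card_image)
qed

lemma rank_count2:
  assumes "\<forall>a<m. \<forall>b<m. (S a \<subset> S b) = (b < a)" "q < m"
  shows "card {S b | b. b < m \<and> S q \<subset> S b} = q"
proof -
  have e: "{S b | b. b < m \<and> S q \<subset> S b} = S ` {..<q}"
  proof
    show "{S b | b. b < m \<and> S q \<subset> S b} \<subseteq> S ` {..<q}"
    proof
      fix X assume "X \<in> {S b | b. b < m \<and> S q \<subset> S b}"
      then obtain b where b: "X = S b" "b < m" "S q \<subset> S b" by blast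
      then have "b < q" using assms by blast
      then show "X \<in> S ` {..<q}" using b by simp
    qed
    show "S ` {..<q} \<subseteq> {S b | b. b < m \<and> S q \<subset> S b}"
    proof
      fix X assume "X \<in> S ` {..<q}"
      then obtain b where b: "b < q" "X = S b" by auto
      then have "b < m" using assms by simp
      then have "S q \<subset> S b" using assms b by blast
      then show "X \<in> {S b | b. b < m \<and> S q \<subset> S b}" using b \<open>b < m\<close> by blast
    qed
  qed
  have "inj_on S {..<q}"
  proof (rule inj_onI)
    fix a b assume "a \<in> {..<q}" "b \<in> {..<q}" "S a = S b"
    note h = this
    show "a = b"
    proof (rule ccontr)
      assume "a \<noteq> b"
      then have "a < b \<or> b < a" by arith
      moreover have "a < m" "b < m" using h assms(2) by auto
      ultimately have "S a \<subset> S b \<or> S b \<subset> S a" using assms(1) by blast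
      then show False using h(3) by auto
    qed
  qed
  then show ?thesis unfolding e by (simp add: card_image)
qed

lemma sur_D:
  assumes "f \<in> sur {..<n} {..<m}"
  shows "f \<in> {..<n} \<rightarrow>\<^sub>E {..<m}" "f ` {..<n} = {..<m}" "\<And>i. i < n \<Longrightarrow> f i < m"
    "\<And>b. b < m \<Longrightarrow> \<exists>i<n. f i = b"
proof -
  show f1: "f \<in> {..<n} \<rightarrow>\<^sub>E {..<m}" and f2: "f ` {..<n} = {..<m}"
    using assms unfolding sur_def by blast+
  show "f i < m" if "i < n" for i using f2 that by blast
  show "\<exists>i<n. f i = b" if "b < m" for b
  proof -
    have "b \<in> f ` {..<n}" using f2 that by simp
    then show ?thesis by auto
  qed
qed

lemma rk_Phi:
  assumes f: "f \<in> sur {..<n} {..<m}" and g: "g \<in> sur {..<k} {..<m}" and i: "i < n"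
  shows "rk n k (Phi n k f g) i = f i"
proof -
  define S where "S b = {j. j < k \<and> g j \<le> b}" for b
  have rs: "rowset k (Phi n k f g) i' = S (f i')" if "i' < n" for i'
    using that by (auto simp: rowset_def Phi_def S_def)
  have mono: "\<forall>a<m. \<forall>b<m. (S a \<subset> S b) = (a < b)"
  proof (intro allI impI)
    fix a b assume a: "a < m" and b: "b < m"
    show "(S a \<subset> S b) = (a < b)"
    proof
      assume "S a \<subset> S b"
      then obtain j where "j \<in> S b" "j \<notin> S a" by blast
      then show "a < b" by (auto simp: S_def)
    next
      assume ab: "a < b"
      obtain j where j: "j < k" "g j = b" using sur_D(4)[OF g b] by blast
      have "S a \<subseteq> S b" using ab by (auto simp: S_def)
      moreover have "j \<in> S b" "j \<notin> S a" using j ab by (auto simp: S_def)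
      ultimately show "S a \<subset> S b" by blast
    qed
  qed
  have "{rowset k (Phi n k f g) i' | i'. i' < n \<and> rowset k (Phi n k f g) i' \<subset> rowset k (Phi n k f g) i}
      = {S b | b. b < m \<and> S b \<subset> S (f i)}" (is "?L = ?R")
  proof
    show "?L \<subseteq> ?R"
    proof
      fix X assume "X \<in> ?L"
      then obtain i' where h: "X = rowset k (Phi n k f g) i'" "i' < n"
        "rowset k (Phi n k f g) i' \<subset> rowset k (Phi n k f g) i" by blast
      then have "X = S (f i')" "f i' < m" "S (f i') \<subset> S (f i)"
        using rs[OF h(2)] rs[OF i] sur_D(3)[OF f h(2)] by auto
      then show "X \<in> ?R" by blast
    qed
    show "?R \<subseteq> ?L"
    proof
      fix X assume "X \<in> ?R"
      then obtain b where h: "X = S b" "b < m" "S b \<subset> S (f i)" by blast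
      obtain i' where i': "i' < n" "f i' = b" using sur_D(4)[OF f h(2)] by blast
      then have "X = rowset k (Phi n k f g) i'" "rowset k (Phi n k f g) i' \<subset> rowset k (Phi n k f g) i"
        using rs[OF i'(1)] rs[OF i] h by auto
      then show "X \<in> ?L" using i' by blast
    qed
  qed
  then show ?thesis unfolding rk_def using rank_count1[OF mono sur_D(3)[OF f i]] by simp
qed

lemma ck_Phi:
  assumes f: "f \<in> sur {..<n} {..<m}" and g: "g \<in> sur {..<k} {..<m}" and j: "j < k"
  shows "ck n k (Phi n k f g) j = g j"
proof -
  define S where "S b = {i. i < n \<and> b \<le> f i}" for b
  have cs: "colset n (Phi n k f g) j' = S (g j')" if "j' < k" for j'
    using that by (auto simp: colset_def Phi_def S_def)
  have mono: "\<forall>a<m. \<forall>b<m. (S a \<subset> S b) = (b < a)"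
  proof (intro allI impI)
    fix a b assume a: "a < m" and b: "b < m"
    show "(S a \<subset> S b) = (b < a)"
    proof
      assume "S a \<subset> S b"
      then obtain i where "i \<in> S b" "i \<notin> S a" by blast
      then show "b < a" by (auto simp: S_def)
    next
      assume ab: "b < a"
      obtain i where i: "i < n" "f i = b" using sur_D(4)[OF f b] by blast
      have "S a \<subseteq> S b" using ab by (auto simp: S_def)
      moreover have "i \<in> S b" "i \<notin> S a" using i ab by (auto simp: S_def)
      ultimately show "S a \<subset> S b" by blast
    qed
  qed
  have "{colset n (Phi n k f g) j' | j'. j' < k \<and> colset n (Phi n k f g) j \<subset> colset n (Phi n k f g) j'}
      = {S b | b. b < m \<and> S (g j) \<subset> S b}" (is "?L = ?R")
  proof
    show "?L \<subseteq> ?R"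
    proof
      fix X assume "X \<in> ?L"
      then obtain j' where h: "X = colset n (Phi n k f g) j'" "j' < k"
        "colset n (Phi n k f g) j \<subset> colset n (Phi n k f g) j'" by blast
      then have "X = S (g j')" "g j' < m" "S (g j) \<subset> S (g j')"
        using cs[OF h(2)] cs[OF j] sur_D(3)[OF g h(2)] by auto
      then show "X \<in> ?R" by blast
    qed
    show "?R \<subseteq> ?L"
    proof
      fix X assume "X \<in> ?R"
      then obtain b where h: "X = S b" "b < m" "S (g j) \<subset> S b" by blast
      obtain j' where j': "j' < k" "g j' = b" using sur_D(4)[OF g h(2)] by blast
      then have "X = colset n (Phi n k f g) j'" "colset n (Phi n k f g) j \<subset> colset n (Phi n k f g) j'"
        using cs[OF j'(1)] cs[OF j] h by auto
      then show "X \<in> ?L" using j' by blast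
    qed
  qed
  then show ?thesis unfolding ck_def using rank_count2[OF mono sur_D(3)[OF g j]] by simp
qed

lemma Phi_inj:
  assumes f: "f \<in> sur {..<n} {..<m}" and g: "g \<in> sur {..<k} {..<m}"
    and f': "f' \<in> sur {..<n} {..<m'}" and g': "g' \<in> sur {..<k} {..<m'}"
    and e: "Phi n k f g = Phi n k f' g'"
  shows "f = f' \<and> g = g'"
proof
  show "f = f'"
  proof
    fix i show "f i = f' i"
    proof (cases "i < n")
      case True
      then show ?thesis using rk_Phi[OF f g True] rk_Phi[OF f' g' True] e by simp
    next
      case False
      then show ?thesis using sur_D(1)[OF f] sur_D(1)[OF f'] by (simp add: PiE_def extensional_def)
    qed
  qed
  show "g = g'"
  proof
    fix j show "g j = g' j"
    proof (cases "j < k")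
      case True
      then show ?thesis using ck_Phi[OF f g True] ck_Phi[OF f' g' True] e by simp
    next
      case False
      then show ?thesis using sur_D(1)[OF g] sur_D(1)[OF g'] by (simp add: PiE_def extensional_def)
    qed
  qed
qed

lemma Phi_in_L:
  assumes fd0: "f \<in> surd d {..<n} {..<m}" and g: "g \<in> sur {..<k} {..<m}"
  shows "Phi n k f g \<in> L_row_le d n k"
proof -
  have f: "f \<in> sur {..<n} {..<m}" and fd: "\<forall>b\<in>{..<m}. card {a\<in>{..<n}. f a = b} \<le> d"
    using fd0 by (auto simp: surd_def)
  have Z: "Phi n k f g \<in> zo_matrices n k" by (auto simp: zo_matrices_def Phi_def)
  have "noswitch n k (Phi n k f g)" by (auto simp: noswitch_def Phi_def)
  then have L: "lonesum n k (Phi n k f g)" using lonesum_iff[OF Z] by simp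
  have R: "no_zero_row n k (Phi n k f g)" unfolding no_zero_row_def
  proof (intro allI impI)
    fix i assume i: "i < n"
    then have "0 < m" using sur_D(3)[OF f i] by simp
    then obtain j where "j < k" "g j = 0" using sur_D(4)[OF g] by blast
    then show "\<exists>j<k. Phi n k f g i j" using i by (auto simp: Phi_def)
  qed
  have C: "no_zero_col n k (Phi n k f g)" unfolding no_zero_col_def
  proof (intro allI impI)
    fix j assume j: "j < k"
    then have gj: "g j < m" using sur_D(3)[OF g j] by simp
    then obtain i where "i < n" "f i = m - 1" using sur_D(4)[OF f, of "m - 1"] by auto
    then show "\<exists>i<n. Phi n k f g i j" using j gj by (auto simp: Phi_def)
  qed
  have RL: "rows_le d n k (Phi n k f g)" unfolding rows_le_def
  proof (intro allI impI)
    fix i assume i: "i < n"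
    have "{i'. i' < n \<and> same_row_type k (Phi n k f g) i i'} = {a\<in>{..<n}. f a = f i}"
    proof (intro equalityI subsetI)
      fix i' assume "i' \<in> {i'. i' < n \<and> same_row_type k (Phi n k f g) i i'}"
      then have i': "i' < n" and st: "\<forall>j<k. Phi n k f g i j = Phi n k f g i' j"
        by (auto simp: same_row_type_def)
      have "f i' = f i"
      proof (rule ccontr)
        assume ne: "f i' \<noteq> f i"
        show False
        proof (cases "f i < f i'")
          case True
          obtain j where "j < k" "g j = f i'" using sur_D(4)[OF g sur_D(3)[OF f i']] by blast
          then show False using st True i i' by (auto simp: Phi_def)
        next
          case False
          then have "f i' < f i" using ne by simp
          obtain j where "j < k" "g j = f i" using sur_D(4)[OF g sur_D(3)[OF f i]] by blast
          then show False using st \<open>f i' < f i\<close> i i' by (auto simp: Phi_def)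
        qed
      qed
      then show "i' \<in> {a\<in>{..<n}. f a = f i}" using i' by simp
    next
      fix i' assume "i' \<in> {a\<in>{..<n}. f a = f i}"
      then show "i' \<in> {i'. i' < n \<and> same_row_type k (Phi n k f g) i i'}"
        using i by (auto simp: same_row_type_def Phi_def)
    qed
    then show "card {i'. i' < n \<and> same_row_type k (Phi n k f g) i i'} \<le> d"
      using fd sur_D(3)[OF f i] by simp
  qed
  show ?thesis using Z L R C RL by (simp add: L_row_le_def lonesum_def)
qed

lemma L_in_Phi:
  assumes AL: "A \<in> L_row_le d n k"
  shows "\<exists>m\<le>min n k. \<exists>f g. f \<in> surd d {..<n} {..<m} \<and> g \<in> sur {..<k} {..<m} \<and> A = Phi n k f g"
proof -
  have Z: "A \<in> zo_matrices n k" and LS: "lonesum n k A" and nzr: "no_zero_row n k A"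
    and nzc: "no_zero_col n k A" and rl: "rows_le d n k A"
    using AL by (auto simp: L_row_le_def lonesum_def)
  have ns: "noswitch n k A" using lonesum_iff[OF Z] LS by simp
  define R where "R i = rowset k A i" for i
  define RS where "RS = R ` {..<n}"
  define m where "m = card RS"
  define rank where "rank X = card {Y\<in>RS. Y \<subset> X}" for X
  define f where "f = (\<lambda>i\<in>{..<n}. rank (R i))"
  define g where "g = (\<lambda>j\<in>{..<k}. card {Y\<in>RS. j \<notin> Y})"
  have finRS: "finite RS" by (simp add: RS_def)
  have memR: "j \<in> R i \<longleftrightarrow> j < k \<and> A i j" for i j by (simp add: R_def rowset_def)
  have chain: "X \<subseteq> Y \<or> Y \<subseteq> X" if XY: "X \<in> RS" "Y \<in> RS" for X Y
  proof (rule ccontr)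
    assume nc: "\<not> (X \<subseteq> Y \<or> Y \<subseteq> X)"
    obtain i i' where ii: "i < n" "i' < n" "X = R i" "Y = R i'" using XY by (auto simp: RS_def)
    obtain j where j: "j \<in> X" "j \<notin> Y" using nc by blast
    obtain j' where j': "j' \<in> Y" "j' \<notin> X" using nc by blast
    have "j < k" "A i j" "\<not> A i' j" "j' < k" "A i' j'" "\<not> A i j'"
      using j j' ii memR by auto
    then show False using ns ii unfolding noswitch_def by blast
  qed
  have RiRS: "R i \<in> RS" if "i < n" for i using that by (simp add: RS_def)
  have fi: "f i = rank (R i)" if "i < n" for i using that by (simp add: f_def)
  have gj: "g j = card {Y\<in>RS. j \<notin> Y}" if "j < k" for j using that by (simp add: g_def)
  have key: "A i j \<longleftrightarrow> g j \<le> f i" if i: "i < n" and j: "j < k" for i j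
  proof
    assume a: "A i j"
    have "{Y\<in>RS. j \<notin> Y} \<subseteq> {Y\<in>RS. Y \<subset> R i}"
    proof clarify
      fix Y assume Y: "Y \<in> RS" "j \<notin> Y"
      have "j \<in> R i" using a j memR by simp
      then show "Y \<subset> R i" using chain[OF Y(1) RiRS[OF i]] Y(2) by blast
    qed
    then show "g j \<le> f i" unfolding gj[OF j] fi[OF i] rank_def
      by (rule card_mono[rotated]) (simp add: finRS)
  next
    assume le: "g j \<le> f i"
    show "A i j"
    proof (rule ccontr)
      assume na: "\<not> A i j"
      have "{Y\<in>RS. Y \<subset> R i} \<subset> {Y\<in>RS. j \<notin> Y}"
      proof
        show "{Y\<in>RS. Y \<subset> R i} \<subseteq> {Y\<in>RS. j \<notin> Y}" using na memR by blast
        have "R i \<in> {Y\<in>RS. j \<notin> Y}" using na memR RiRS[OF i] by simp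
        moreover have "R i \<notin> {Y\<in>RS. Y \<subset> R i}" by simp
        ultimately show "{Y\<in>RS. Y \<subset> R i} \<noteq> {Y\<in>RS. j \<notin> Y}" by blast
      qed
      then have "f i < g j" unfolding gj[OF j] fi[OF i] rank_def
        by (rule psubset_card_mono[rotated]) (simp add: finRS)
      then show False using le by simp
    qed
  qed
  have rank_lt: "rank X < m" if "X \<in> RS" for X
  proof -
    have "{Y\<in>RS. Y \<subset> X} \<subset> RS" using that by blast
    then show ?thesis unfolding rank_def m_def by (rule psubset_card_mono[OF finRS])
  qed
  have rank_mono: "rank X < rank Y" if "X \<in> RS" "Y \<in> RS" "X \<subset> Y" for X Y
  proof -
    have "{Z\<in>RS. Z \<subset> X} \<subset> {Z\<in>RS. Z \<subset> Y}"
    proof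
      show "{Z\<in>RS. Z \<subset> X} \<subseteq> {Z\<in>RS. Z \<subset> Y}" using that by blast
      have "X \<in> {Z\<in>RS. Z \<subset> Y}" using that by simp
      moreover have "X \<notin> {Z\<in>RS. Z \<subset> X}" by simp
      ultimately show "{Z\<in>RS. Z \<subset> X} \<noteq> {Z\<in>RS. Z \<subset> Y}" by blast
    qed
    then show ?thesis unfolding rank_def by (rule psubset_card_mono[rotated]) (simp add: finRS)
  qed
  have rank_inj: "inj_on rank RS"
  proof (rule inj_onI)
    fix X Y assume X: "X \<in> RS" and Y: "Y \<in> RS" and e: "rank X = rank Y"
    show "X = Y"
    proof (rule ccontr)
      assume "X \<noteq> Y"
      then have "X \<subset> Y \<or> Y \<subset> X" using chain[OF X Y] by blast
      then show False using rank_mono[OF X Y] rank_mono[OF Y X] e by auto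
    qed
  qed
  have rank_img: "rank ` RS = {..<m}"
  proof (rule card_subset_eq)
    show "finite {..<m}" by simp
    show "rank ` RS \<subseteq> {..<m}" using rank_lt by auto
    show "card (rank ` RS) = card {..<m}" using card_image[OF rank_inj] by (simp add: m_def)
  qed
  have fimg: "f ` {..<n} = {..<m}"
  proof -
    have "f ` {..<n} = (\<lambda>i. rank (R i)) ` {..<n}" by (auto simp: f_def)
    also have "\<dots> = rank ` RS" by (auto simp: RS_def)
    finally show ?thesis using rank_img by simp
  qed
  have fS: "f \<in> sur {..<n} {..<m}"
    unfolding sur_def using fimg by (auto simp: f_def)
  have glt: "g j < m" if j: "j < k" for j
  proof -
    obtain i where i: "i < n" "A i j" using nzc j by (auto simp: no_zero_col_def)
    have "{Y\<in>RS. j \<notin> Y} \<subset> RS" using RiRS[OF i(1)] i(2) j memR by blast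
    then show ?thesis unfolding gj[OF j] m_def by (rule psubset_card_mono[OF finRS])
  qed
  have gsurj: "\<exists>j<k. g j = a" if a: "a < m" for a
  proof (rule ccontr)
    assume na: "\<not> (\<exists>j<k. g j = a)"
    obtain i where i: "i < n" "f i = a" using sur_D(4)[OF fS a] by blast
    show False
    proof (cases "a = 0")
      case True
      obtain j where "j < k" "A i j" using nzr i by (auto simp: no_zero_row_def)
      then have "g j \<le> 0" using key i True by simp
      then show False using na \<open>j < k\<close> True by auto
    next
      case False
      have "a - 1 < m" using a by simp
      then obtain i' where i': "i' < n" "f i' = a - 1" using sur_D(4)[OF fS] by blast
      have "R i = R i'"
      proof
        show "R i \<subseteq> R i'"
        proof
          fix j assume "j \<in> R i"
          then have j: "j < k" "A i j" using memR by auto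
          then have "g j \<le> a" using key i by simp
          moreover have "g j \<noteq> a" using na j by auto
          ultimately have "g j \<le> f i'" using i' by simp
          then show "j \<in> R i'" using key[OF i'(1) j(1)] memR j by simp
        qed
        show "R i' \<subseteq> R i"
        proof
          fix j assume "j \<in> R i'"
          then have j: "j < k" "A i' j" using memR by auto
          then have "g j \<le> f i" using key i' i False by simp
          then show "j \<in> R i" using key[OF i(1) j(1)] memR j by simp
        qed
      qed
      then have "f i = f i'" using fi i i' by simp
      then show False using i i' False by simp
    qed
  qed
  have gS: "g \<in> sur {..<k} {..<m}"
    unfolding sur_def
  proof (intro CollectI conjI)
    show "g \<in> {..<k} \<rightarrow>\<^sub>E {..<m}" using glt by (auto simp: g_def)
    show "g ` {..<k} = {..<m}" using glt gsurj by force
  qed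
  have fd: "\<forall>b\<in>{..<m}. card {a\<in>{..<n}. f a = b} \<le> d"
  proof
    fix b assume "b \<in> {..<m}"
    then obtain i where i: "i < n" "f i = b" using sur_D(4)[OF fS] by auto
    have "{a\<in>{..<n}. f a = b} = {i'. i' < n \<and> same_row_type k A i i'}"
    proof (intro equalityI subsetI)
      fix i' assume "i' \<in> {a\<in>{..<n}. f a = b}"
      then have i': "i' < n" "f i' = f i" using i by auto
      then show "i' \<in> {i'. i' < n \<and> same_row_type k A i i'}"
        using key i by (auto simp: same_row_type_def)
    next
      fix i' assume "i' \<in> {i'. i' < n \<and> same_row_type k A i i'}"
      then have i': "i' < n" "\<forall>j<k. A i j = A i' j" by (auto simp: same_row_type_def)
      then have "R i = R i'" using memR by auto
      then show "i' \<in> {a\<in>{..<n}. f a = b}" using fi i i' by auto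
    qed
    then show "card {a\<in>{..<n}. f a = b} \<le> d" using rl i by (simp add: rows_le_def)
  qed
  have AP: "A = Phi n k f g"
  proof (intro ext)
    fix i j show "A i j = Phi n k f g i j"
    proof (cases "i < n \<and> j < k")
      case True then show ?thesis using key by (simp add: Phi_def)
    next
      case False
      then have "n \<le> i \<or> k \<le> j" by auto
      then show ?thesis using Z unfolding zo_matrices_def Phi_def by auto
    qed
  qed
  have "m \<le> n" unfolding m_def RS_def using card_image_le[of "{..<n}" R] by simp
  moreover have "m \<le> k" using card_image_le[of "{..<k}" g] sur_D(2)[OF gS] by simp
  ultimately show ?thesis using fS fd gS AP by (auto simp: surd_def)
qed

lemma lessThan_inj: "{..<(m::nat)} = {..<m'} \<Longrightarrow> m = m'"
  by (metis card_lessThan)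

lemma card_row:
  "card (L_row_le d n k) = (\<Sum>m\<le>min n k. fact m * Stirling_le d n m * (fact m * Stirling k m))"
proof -
  define U where "U = (\<Union>m\<in>{..min n k}. surd d {..<n} {..<m} \<times> sur {..<k} {..<m})"
  define P where "P = (\<lambda>(f, g). Phi n k f g)"
  have L: "L_row_le d n k = P ` U"
  proof
    show "L_row_le d n k \<subseteq> P ` U"
    proof
      fix A assume "A \<in> L_row_le d n k"
      then obtain m f g where "m \<le> min n k" "f \<in> surd d {..<n} {..<m}" "g \<in> sur {..<k} {..<m}"
        "A = Phi n k f g" using L_in_Phi by blast
      then show "A \<in> P ` U" unfolding U_def P_def by (auto intro!: image_eqI[where x="(f, g)"])
    qed
    show "P ` U \<subseteq> L_row_le d n k"
      using Phi_in_L by (auto simp: U_def P_def)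
  qed
  have inj: "inj_on P U"
  proof (rule inj_onI)
    fix x y assume "x \<in> U" "y \<in> U" and e: "P x = P y"
    then obtain f g f' g' m m' where xy: "x = (f, g)" "y = (f', g')"
      "f \<in> sur {..<n} {..<m}" "g \<in> sur {..<k} {..<m}"
      "f' \<in> sur {..<n} {..<m'}" "g' \<in> sur {..<k} {..<m'}"
      unfolding U_def surd_def by auto
    then show "x = y" using Phi_inj[OF xy(3-6)] e by (simp add: P_def)
  qed
  have finsd: "finite (surd d {..<n} {..<m})" for m :: nat
  proof (rule finite_subset)
    show "finite (sur {..<n} {..<m})" by (simp add: finite_sur)
  qed (auto simp: surd_def)
  have "card U = (\<Sum>m\<le>min n k. card (surd d {..<n} {..<m} \<times> sur {..<k} {..<m}))"
    unfolding U_def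
  proof (rule card_UN_disjoint)
    show "finite {..min n k}" by simp
    show "\<forall>m\<in>{..min n k}. finite (surd d {..<n} {..<m} \<times> sur {..<k} {..<m})"
      using finsd finite_sur by auto
    show "\<forall>m\<in>{..min n k}. \<forall>m'\<in>{..min n k}. m \<noteq> m' \<longrightarrow>
      (surd d {..<n} {..<m} \<times> sur {..<k} {..<m}) \<inter> (surd d {..<n} {..<m'} \<times> sur {..<k} {..<m'}) = {}"
    proof (intro ballI impI)
      fix m m' :: nat assume ne: "m \<noteq> m'"
      show "(surd d {..<n} {..<m} \<times> sur {..<k} {..<m}) \<inter> (surd d {..<n} {..<m'} \<times> sur {..<k} {..<m'}) = {}"
      proof (rule ccontr)
        assume "(surd d {..<n} {..<m} \<times> sur {..<k} {..<m}) \<inter> (surd d {..<n} {..<m'} \<times> sur {..<k} {..<m'}) \<noteq> {}"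
        then obtain f g where "f \<in> sur {..<n} {..<m}" "f \<in> sur {..<n} {..<m'}"
          by (auto simp: surd_def)
        then have "{..<m} = {..<m'}" using sur_D(2) by metis
        then show False using ne lessThan_inj by blast
      qed
    qed
  qed
  also have "\<dots> = (\<Sum>m\<le>min n k. fact m * Stirling_le d n m * (fact m * Stirling k m))"
  proof (rule sum.cong[OF refl])
    fix m
    have "card (surd d {..<n} {..<m}) = fact m * Stirling_le d n m"
      using card_surd[of "{..<n}" "{..<m}" d] by (simp add: parts_def Stirling_le_def)
    moreover have "card (sur {..<k} {..<m}) = fact m * Stirling k m"
      using card_sur[of "{..<k}" "{..<m}"] by simp
    ultimately show "card (surd d {..<n} {..<m} \<times> sur {..<k} {..<m}) = fact m * Stirling_le d n m * (fact m * Stirling k m)"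
      by (simp add: card_cartesian_product)
  qed
  finally show ?thesis unfolding L using card_image[OF inj] by simp
qed

definition tr :: "(nat \<Rightarrow> nat \<Rightarrow> bool) \<Rightarrow> nat \<Rightarrow> nat \<Rightarrow> bool" where
  "tr A = (\<lambda>i j. A j i)"

lemma tr_tr [simp]: "tr (tr A) = A" by (simp add: tr_def)

lemma col_row_iff: "B \<in> L_col_le d n k \<longleftrightarrow> tr B \<in> L_row_le d k n"
proof -
  have z: "tr B \<in> zo_matrices k n \<longleftrightarrow> B \<in> zo_matrices n k"
    by (auto simp: zo_matrices_def tr_def)
  have ns: "noswitch k n (tr B) \<longleftrightarrow> noswitch n k B"
    unfolding noswitch_def tr_def by blast
  have ls: "lonesum k n (tr B) \<longleftrightarrow> lonesum n k B"
  proof (cases "B \<in> zo_matrices n k")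
    case True
    then show ?thesis using lonesum_iff[OF True] lonesum_iff[of "tr B" k n] z ns by simp
  next
    case False
    then show ?thesis using z by (simp add: lonesum_def)
  qed
  have r: "no_zero_row k n (tr B) \<longleftrightarrow> no_zero_col n k B"
    by (simp add: no_zero_row_def no_zero_col_def tr_def)
  have c: "no_zero_col k n (tr B) \<longleftrightarrow> no_zero_row n k B"
    by (simp add: no_zero_row_def no_zero_col_def tr_def)
  have rl: "rows_le d k n (tr B) \<longleftrightarrow> cols_le d n k B"
    by (simp add: rows_le_def cols_le_def same_row_type_def same_col_type_def tr_def)
  show ?thesis using ls r c rl by (auto simp: L_col_le_def L_row_le_def)
qed

lemma card_col: "card (L_col_le d n k) = card (L_row_le d k n)"
proof -
  have "L_col_le d n k = tr ` L_row_le d k n"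
  proof
    show "L_col_le d n k \<subseteq> tr ` L_row_le d k n"
    proof
      fix B assume "B \<in> L_col_le d n k"
      then have "tr B \<in> L_row_le d k n" using col_row_iff by blast
      then show "B \<in> tr ` L_row_le d k n" by (metis image_eqI tr_tr)
    qed
    show "tr ` L_row_le d k n \<subseteq> L_col_le d n k"
      using col_row_iff[of "tr _" d n k] by auto
  qed
  moreover have "inj_on tr (L_row_le d k n)" by (metis inj_onI tr_tr)
  ultimately show ?thesis by (simp add: card_image)
qed

theorem corollary1:
  fixes d n k :: nat
  assumes "d \<ge> 1"
  shows "card (L_row_le d n k) =
           (\<Sum>m\<le>min n k. fact m * Stirling_le d n m * (fact m * Stirling k m)) \<and>
         card (L_col_le d n k) =
           (\<Sum>m\<le>min n k. fact m * Stirling n m * (fact m * Stirling_le d k m))"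
proof
  show "card (L_row_le d n k) =
           (\<Sum>m\<le>min n k. fact m * Stirling_le d n m * (fact m * Stirling k m))" by (rule card_row)
  show "card (L_col_le d n k) =
           (\<Sum>m\<le>min n k. fact m * Stirling n m * (fact m * Stirling_le d k m))"
    unfolding card_col card_row by (simp add: min.commute mult_ac)
qed

end
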